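(* Let $p>0$, $\alpha>0$ and let $f$ be a measurable, non-negative, non-increasing function on $(0,\infty)$. If $p\ge1$, then $$\int_0^\infty\Big(\int_x^\infty f(y)dy\Big)^p x^{\alpha}\frac{dx}{x}\ge p\,B(p,\alpha)\int_0^\infty (xf(x))^p x^{\alpha}\frac{dx}{x},$$ and if $0<p\le1$ the inequality holds in the reversed direction. In both cases the constant $p\,B(p,\alpha)$ is sharp.
   Context: $B(u,v)=\int_0^1 t^{u-1}(1-t)^{v-1}dt$ is the Euler beta function. *)

theory Defs
  imports "HOL-Analysis.Analysis"
begin

definition ennpow :: "ennreal \<Rightarrow> real \<Rightarrow> ennreal" where
  "ennpow x p = (if x = \<infinity> then \<infinity> else ennreal (enn2real x powr p))"

definition hardy_lhs :: "(real \<Rightarrow> real) \<Rightarrow> real \<Rightarrow> real \<Rightarrow> ennreal" where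
  "hardy_lhs f p \<alpha> =
     (\<integral>\<^sup>+ x \<in> {0<..}. ennpow (\<integral>\<^sup>+ y \<in> {x<..}. ennreal (f y) \<partial>lborel) p
                      * ennreal (x powr \<alpha> / x) \<partial>lborel)"

definition hardy_rhs :: "(real \<Rightarrow> real) \<Rightarrow> real \<Rightarrow> real \<Rightarrow> ennreal" where
  "hardy_rhs f p \<alpha> =
     (\<integral>\<^sup>+ x \<in> {0<..}. ennreal ((x * f x) powr p * (x powr \<alpha> / x)) \<partial>lborel)"

definition admissible :: "(real \<Rightarrow> real) \<Rightarrow> bool" where
  "admissible f \<longleftrightarrow> set_borel_measurable lborel {0<..} f
     \<and> (\<forall>x>0. 0 \<le> f x) \<and> (\<forall>x y. 0 < x \<longrightarrow> x \<le> y \<longrightarrow> f y \<le> f x)"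

end

theory Submission
  imports Defs
begin


lemma mono_countable_deriv:
  fixes h :: "real \<Rightarrow> real"
  assumes ab: "a \<le> b" and cont: "continuous_on {a..b} h" and D: "countable D"
    and der: "\<And>t. t \<in> {a<..<b} - D \<Longrightarrow> \<exists>d\<ge>0. (h has_real_derivative d) (at t)"
  shows "h a \<le> h b"
proof (rule ccontr)
  assume "\<not> h a \<le> h b"
  hence hlt: "h b < h a" by simp
  with ab have ab': "a < b" by (cases "a = b") auto
  define e where "e = (h a - h b) / (2 * (b - a))"
  have e: "e > 0" using hlt ab' by (simp add: e_def)
  define g where "g t = h t + e * (t - a)" for t
  have gb: "g b < g a"
  proof -
    have "e * (b - a) = (h a - h b) / 2" using ab' by (simp add: e_def field_simps)
    thus ?thesis using hlt by (simp add: g_def)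
  qed
  have gcont: "continuous_on {a..b} g" unfolding g_def by (intro continuous_intros cont)
  have "uncountable {g b<..<g a}" using gb by (simp add: uncountable_open_interval)
  moreover have "countable (g ` D)" using D by simp
  ultimately obtain y where y: "y \<in> {g b<..<g a}" "y \<notin> g ` D"
    by (metis countable_subset subsetI)
  define S where "S = {t\<in>{a..b}. y \<le> g t}"
  have Sne: "S \<noteq> {}" using y ab by (auto simp: S_def)
  have Sbdd: "bdd_above S" by (auto simp: S_def bdd_above_def)
  have Scl: "closed S"
  proof -
    have "closed ({a..b} \<inter> g -` {y..})"
      by (rule continuous_closed_preimage[OF gcont]) auto
    moreover have "S = {a..b} \<inter> g -` {y..}" by (auto simp: S_def)
    ultimately show ?thesis by simp
  qed
  define c where "c = Sup S"
  have cS: "c \<in> S" unfolding c_def by (rule closed_contains_Sup[OF Sne Sbdd Scl])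
  have above: "t \<in> {a..b} \<Longrightarrow> t > c \<Longrightarrow> g t < y" for t
  proof -
    assume t: "t \<in> {a..b}" "t > c"
    show "g t < y"
    proof (rule ccontr)
      assume "\<not> g t < y" hence "t \<in> S" using t by (auto simp: S_def)
      hence "t \<le> c" unfolding c_def by (rule cSup_upper[OF _ Sbdd])
      with t show False by simp
    qed
  qed
  have cb: "c < b"
  proof -
    have "c \<le> b" using cS by (auto simp: S_def)
    moreover have "c \<noteq> b" using cS y(1) by (auto simp: S_def)
    ultimately show ?thesis by simp
  qed
  have gc: "g c = y"
  proof (rule ccontr)
    assume "g c \<noteq> y"
    hence gt: "g c > y" using cS by (auto simp: S_def)
    have "c \<in> {a..b}" using cS by (auto simp: S_def)
    then obtain d where d: "d > 0" "\<And>t. t \<in> {a..b} \<Longrightarrow> dist t c < d \<Longrightarrow> dist (g t) (g c) < g c - y"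
      using gcont gt unfolding continuous_on_iff by (metis diff_gt_0_iff_gt)
    define t where "t = min b (c + d/2)"
    have t: "t \<in> {a..b}" "t > c" "dist t c < d" using cb d \<open>c \<in> {a..b}\<close>
      by (auto simp: t_def dist_real_def)
    have "g t < y" by (rule above[OF t(1,2)])
    moreover have "dist (g t) (g c) < g c - y" by (rule d(2)[OF t(1,3)])
    ultimately show False by (simp add: dist_real_def)
  qed
  have ca: "c \<noteq> a" using gc y(1) by auto
  have "c \<in> {a<..<b} - D"
    using cS ca cb gc y(2) by (auto simp: S_def)
  then obtain d where d: "d \<ge> 0" "(h has_real_derivative d) (at c)" using der by blast
  have "(g has_real_derivative d + e) (at c)" unfolding g_def
    by (auto intro!: derivative_eq_intros d(2))
  then obtain r where r: "r > 0" "\<And>k. k > 0 \<Longrightarrow> k < r \<Longrightarrow> g c < g (c + k)"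
    using DERIV_pos_inc_right[of g "d+e" c] d e by auto
  define k where "k = min (r/2) (b - c)"
  have k: "k > 0" "k < r" using r cb by (auto simp: k_def)
  have "g c < g (c + k)" using r(2)[OF k] .
  moreover have "c + k \<in> {a..b}" using cS cb k by (auto simp: S_def k_def)
  ultimately show False using above[of "c+k"] gc k by auto
qed

locale hsetup =
  fixes f :: "real \<Rightarrow> real" and x p :: real
  assumes p: "p > 0"
    and nonneg: "\<And>t. t \<ge> x \<Longrightarrow> 0 \<le> f t"
    and anti: "\<And>t u. x \<le> t \<Longrightarrow> t \<le> u \<Longrightarrow> f u \<le> f t"
begin

definition k where "k t = p * (t - x) powr (p - 1) * f t powr p"
definition G where "G s = integral {x..s} f"
definition K where "K s = integral {x..s} k"

lemma antimono: "mono_on {x..s} (\<lambda>t. - f t)"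
  by (auto simp: mono_on_def intro: anti)

lemma antimono_p: "mono_on {x..s} (\<lambda>t. - (f t powr p))"
  using nonneg anti p by (auto simp: mono_on_def intro!: powr_mono2)

lemma int_f: "f integrable_on {x..s}"
proof -
  have "(\<lambda>t. - f t) integrable_on {x..s}" by (rule integrable_on_mono_on[OF antimono])
  from integrable_neg[OF this] show ?thesis by simp
qed

lemma meas_fp: "(\<lambda>t. f t powr p) \<in> borel_measurable (lebesgue_on {x..s})"
proof -
  have "space lborel = space lebesgue" "sets borel \<subseteq> sets lebesgue"
    by force+
  then have "(\<lambda>t. - (f t powr p)) \<in> borel_measurable (lebesgue_on {x..s})"
    by (metis antimono_p borel_measurable_mono_on_fnc borel_measurable_subalgebra mono_restrict_space space_lborel space_restrict_space)
  from borel_measurable_uminus[OF this] show ?thesis by simp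
qed

lemma pow_int: "s \<ge> x \<Longrightarrow> ((\<lambda>t. p * (t - x) powr (p - 1)) has_integral (s - x) powr p) {x..s}"
proof -
  assume sx: "s \<ge> x"
  have "((\<lambda>t. p * (t - x) powr (p - 1)) has_integral ((s - x) powr p - (x - x) powr p)) {x..s}"
  proof (rule fundamental_theorem_of_calculus_interior[OF sx])
    show "continuous_on {x..s} (\<lambda>t. (t - x) powr p)"
      using p by (intro continuous_on_powr' continuous_intros) auto
    fix t assume t: "t \<in> {x<..<s}"
    show "((\<lambda>t. (t - x) powr p) has_vector_derivative p * (t - x) powr (p - 1)) (at t)"
      unfolding has_real_derivative_iff_has_vector_derivative[symmetric]
      using t by (auto intro!: derivative_eq_intros)
  qed
  thus ?thesis by simp
qed

lemma int_k: "k integrable_on {x..s}"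
proof (cases "s \<ge> x")
  case False
  thus ?thesis by (simp add: integrable_on_empty)
next
  case True
  have "(\<lambda>t. p * (t - x) powr (p - 1)) absolutely_integrable_on {x..s}"
    using pow_int[OF True] p
    by (intro nonnegative_absolutely_integrable_1) (auto simp: has_integral_integrable)
  moreover have "bounded ((\<lambda>t. f t powr p) ` {x..s})"
  proof -
    have "\<forall>t\<in>{x..s}. norm (f t powr p) \<le> f x powr p"
      using nonneg anti p by (auto intro!: powr_mono2)
    thus ?thesis by (auto simp: bounded_iff)
  qed
  ultimately have "(\<lambda>t. f t powr p * (p * (t - x) powr (p - 1))) absolutely_integrable_on {x..s}"
    by (intro absolutely_integrable_bounded_measurable_product_real[OF meas_fp]) auto
  hence "(\<lambda>t. f t powr p * (p * (t - x) powr (p - 1))) integrable_on {x..s}"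
    using absolutely_integrable_on_def by blast
  thus ?thesis by (simp add: k_def[abs_def] mult_ac)
qed

definition Dset where "Dset s = {t\<in>{x..s}. \<not> continuous (at t within {x..s}) (\<lambda>t. - f t)}"

lemma Dset_countable: "countable (Dset s)"
  unfolding Dset_def by (rule mono_on_ctble_discont[OF antimono])

lemma G_nonneg: "t \<ge> x \<Longrightarrow> G t \<ge> 0"
  unfolding G_def by (rule integral_nonneg[OF int_f]) (auto intro: nonneg)

lemma G_ge: "t \<ge> x \<Longrightarrow> (t - x) * f t \<le> G t"
proof -
  assume tx: "t \<ge> x"
  have "integral {x..t} (\<lambda>_. f t) \<le> integral {x..t} f"
    by (rule integral_le[OF _ int_f]) (auto intro: anti)
  thus ?thesis using tx by (simp add: G_def)
qed

lemma deriv_ok: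
  assumes t: "t \<in> {x<..<s} - Dset s"
  shows "(G has_real_derivative f t) (at t)" "(K has_real_derivative k t) (at t)"
proof -
  have tx: "x < t" "t < s" using t by auto
  have "continuous (at t within {x..s}) (\<lambda>t. - f t)" using t by (auto simp: Dset_def)
  hence "continuous (at t) (\<lambda>t. - f t)" using at_within_Icc_at[OF tx] by simp
  hence cf: "continuous (at t) f" using continuous_minus[of "at t" "\<lambda>t. - f t"] by simp
  have "((\<lambda>u. integral {x..u} f) has_vector_derivative f t) (at t within ({x..s} - {}))"
    by (rule integral_has_vector_derivative_continuous_at[OF int_f])
       (use tx cf in \<open>auto intro: continuous_at_imp_continuous_at_within\<close>)
  thus "(G has_real_derivative f t) (at t)"
    using at_within_Icc_at[OF tx] by (simp add: G_def[abs_def] has_real_derivative_iff_has_vector_derivative)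
  have cfp: "continuous (at t) (\<lambda>u. f u powr p)"
  proof -
    have ev: "eventually (\<lambda>u. u > x) (at t)"
      using order_tendstoD(1)[OF tendsto_ident_at tx(1)] by simp
    have "((\<lambda>u. f u powr p) \<longlongrightarrow> f t powr p) (at t)"
      by (rule tendsto_powr') (use cf p ev in \<open>auto simp: isCont_def elim!: eventually_mono intro: nonneg\<close>)
    thus ?thesis by (simp add: isCont_def)
  qed
  have ck: "continuous (at t) k"
    unfolding k_def[abs_def] using tx
    by (intro continuous_intros cfp continuous_at_within_powr) auto
  have "((\<lambda>u. integral {x..u} k) has_vector_derivative k t) (at t within ({x..s} - {}))"
    by (rule integral_has_vector_derivative_continuous_at[OF int_k])
       (use tx ck in \<open>auto intro: continuous_at_imp_continuous_at_within\<close>)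
  thus "(K has_real_derivative k t) (at t)"
    using at_within_Icc_at[OF tx] by (simp add: K_def[abs_def] has_real_derivative_iff_has_vector_derivative)
qed

lemma k_eq: "t > x \<Longrightarrow> f t > 0 \<Longrightarrow> k t = p * ((t - x) * f t) powr (p - 1) * f t"
proof -
  assume t: "t > x" "f t > 0"
  have "f t powr p = f t powr (p - 1) * f t"
    using powr_add[of "f t" "p - 1" 1] t by simp
  thus ?thesis using t by (simp add: k_def powr_mult mult_ac)
qed

lemma k_zero: "f t = 0 \<Longrightarrow> k t = 0"
  using p by (simp add: k_def)

lemma G_x: "G x = 0" by (simp add: G_def)
lemma K_x: "K x = 0" by (simp add: K_def)

lemma G_cont: "continuous_on {x..s} G"
  unfolding G_def[abs_def] by (rule indefinite_integral_continuous_1[OF int_f])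
lemma K_cont: "continuous_on {x..s} K"
  unfolding K_def[abs_def] by (rule indefinite_integral_continuous_1[OF int_k])

lemma Gp_cont: "e > 0 \<Longrightarrow> continuous_on {x..s} (\<lambda>t. (G t + e) powr p)"
  using G_nonneg by (intro continuous_on_powr' continuous_intros G_cont) (auto, fastforce)

lemma Gp_deriv: "e > 0 \<Longrightarrow> t \<in> {x<..<s} - Dset s \<Longrightarrow>
   ((\<lambda>t. (G t + e) powr p) has_real_derivative p * (G t + e) powr (p - 1) * f t) (at t)"
proof -
  assume e: "e > 0" and t: "t \<in> {x<..<s} - Dset s"
  have "G t \<ge> 0" using t by (intro G_nonneg) auto
  hence "((\<lambda>t. G t + e) has_real_derivative f t) (at t)" "G t + e > 0"
    using deriv_ok(1)[OF t] e by (auto intro!: derivative_eq_intros)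
  from DERIV_fun_powr[OF this, of p] show ?thesis by simp
qed

lemma ineq_ge1:
  assumes p1: "p \<ge> 1" and sx: "s \<ge> x" and e: "e > 0"
  shows "K s \<le> (G s + e) powr p - e powr p"
proof -
  define \<Psi> where "\<Psi> t = (G t + e) powr p - K t" for t
  have "\<Psi> x \<le> \<Psi> s"
  proof (rule mono_countable_deriv[OF sx _ Dset_countable])
    show "continuous_on {x..s} \<Psi>" unfolding \<Psi>_def[abs_def]
      by (intro continuous_intros Gp_cont[OF e] K_cont)
    fix t assume t: "t \<in> {x<..<s} - Dset s"
    have "((\<lambda>t. \<Psi> t) has_real_derivative p * (G t + e) powr (p - 1) * f t - k t) (at t)"
      unfolding \<Psi>_def by (intro DERIV_diff Gp_deriv[OF e t] deriv_ok(2)[OF t])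
    moreover have "k t \<le> p * (G t + e) powr (p - 1) * f t"
    proof (cases "f t = 0")
      case True thus ?thesis by (simp add: k_zero)
    next
      case False
      hence ft: "f t > 0" using nonneg[of t] t by force
      have "((t - x) * f t) powr (p - 1) \<le> (G t + e) powr (p - 1)"
        using G_ge[of t] t e ft p1 by (intro powr_mono2) auto
      thus ?thesis using k_eq[of t] t ft p by (auto intro!: mult_right_mono mult_left_mono)
    qed
    ultimately show "\<exists>d\<ge>0. (\<Psi> has_real_derivative d) (at t)"
      by (intro exI[of _ "_ - _"] conjI) auto
  qed
  thus ?thesis by (simp add: \<Psi>_def G_x K_x)
qed

lemma ineq_le1:
  assumes p1: "p \<le> 1" and sx: "s \<ge> x" and e: "e > 0"
  shows "(G s + e) powr p - e powr p \<le> K s"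
proof -
  define \<Psi> where "\<Psi> t = K t - (G t + e) powr p" for t
  have "\<Psi> x \<le> \<Psi> s"
  proof (rule mono_countable_deriv[OF sx _ Dset_countable])
    show "continuous_on {x..s} \<Psi>" unfolding \<Psi>_def[abs_def]
      by (intro continuous_intros Gp_cont[OF e] K_cont)
    fix t assume t: "t \<in> {x<..<s} - Dset s"
    have "((\<lambda>t. \<Psi> t) has_real_derivative k t - p * (G t + e) powr (p - 1) * f t) (at t)"
      unfolding \<Psi>_def by (intro DERIV_diff Gp_deriv[OF e t] deriv_ok(2)[OF t])
    moreover have "p * (G t + e) powr (p - 1) * f t \<le> k t"
    proof (cases "f t = 0")
      case True thus ?thesis by (simp add: k_zero)
    next
      case False
      hence ft: "f t > 0" using nonneg[of t] t by force
      have "(G t + e) powr (p - 1) \<le> ((t - x) * f t) powr (p - 1)"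
        using G_ge[of t] t e ft p1 by (intro powr_mono2') auto
      thus ?thesis using k_eq[of t] t ft p by (auto intro!: mult_right_mono mult_left_mono)
    qed
    ultimately show "\<exists>d\<ge>0. (\<Psi> has_real_derivative d) (at t)"
      by (intro exI[of _ "_ - _"] conjI) auto
  qed
  thus ?thesis by (simp add: \<Psi>_def G_x K_x)
qed

lemma k_nonneg: "t \<ge> x \<Longrightarrow> k t \<ge> 0"
  using p nonneg by (simp add: k_def)

lemma K_nonneg: "s \<ge> x \<Longrightarrow> K s \<ge> 0"
  unfolding K_def by (rule integral_nonneg[OF int_k]) (auto intro: k_nonneg)

lemma ge1_noe:
  assumes p1: "p \<ge> 1" and sx: "s \<ge> x"
  shows "K s \<le> G s powr p"
proof -
  have K0: "K s \<ge> 0" using K_nonneg[OF sx] .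
  have "K s powr (1/p) \<le> G s"
  proof (rule field_le_epsilon)
    fix e :: real assume e: "e > 0"
    have "K s \<le> (G s + e) powr p" using ineq_ge1[OF p1 sx e] powr_ge_zero[of e p] by linarith
    hence "K s powr (1/p) \<le> ((G s + e) powr p) powr (1/p)"
      using K0 p e by (intro powr_mono2) auto
    also have "\<dots> = G s + e" using G_nonneg[OF sx] e p by (simp add: powr_powr)
    finally show "K s powr (1/p) \<le> G s + e" .
  qed
  hence "(K s powr (1/p)) powr p \<le> G s powr p" using p by (intro powr_mono2) auto
  thus ?thesis using K0 p by (simp add: powr_powr)
qed

lemma le1_noe:
  assumes p1: "p \<le> 1" and sx: "s \<ge> x"
  shows "G s powr p \<le> K s"
proof (rule field_le_epsilon)
  fix d :: real assume d: "d > 0"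
  define e where "e = d powr (1/p)"
  have e: "e > 0" using d by (simp add: e_def)
  have ep: "e powr p = d" using d p by (simp add: e_def powr_powr)
  have "G s powr p \<le> (G s + e) powr p" using G_nonneg[OF sx] e p by (intro powr_mono2) auto
  also have "\<dots> \<le> K s + e powr p" using ineq_le1[OF p1 sx e] by simp
  finally show "G s powr p \<le> K s + d" using ep by simp
qed

lemma G_nn: "s \<ge> x \<Longrightarrow> (\<integral>\<^sup>+ y\<in>{x<..<s}. ennreal (f y) \<partial>lborel) = ennreal (G s)"
  unfolding G_def
  by (rule nn_integral_has_integral_lebesgue')
     (use int_f in \<open>auto intro: nonneg simp: has_integral_Icc_iff_Ioo[symmetric]\<close>)

lemma K_nn: "s \<ge> x \<Longrightarrow> (\<integral>\<^sup>+ y\<in>{x<..<s}. ennreal (k y) \<partial>lborel) = ennreal (K s)"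
  unfolding K_def
  by (rule nn_integral_has_integral_lebesgue')
     (use int_k in \<open>auto intro: k_nonneg simp: has_integral_Icc_iff_Ioo[symmetric]\<close>)

end

lemma mct_Ioi:
  fixes h :: "real \<Rightarrow> real"
  assumes "\<And>n. (\<lambda>y. ennreal (h y) * indicator {x<..<x + real n} y) \<in> borel_measurable lborel"
  shows "(\<integral>\<^sup>+ y\<in>{x<..}. ennreal (h y) \<partial>lborel) = (SUP n. \<integral>\<^sup>+ y\<in>{x<..<x + real n}. ennreal (h y) \<partial>lborel)"
proof -
  have eq: "ennreal (h y) * indicator {x<..} y = (SUP n. ennreal (h y) * indicator {x<..<x + real n} y)" for y
  proof (cases "y > x")
    case False thus ?thesis by (simp add: indicator_def)
  next
    case True
    obtain N :: nat where N: "y - x < real N" using reals_Archimedean2 by blast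
    show ?thesis
    proof (rule antisym)
      have "ennreal (h y) * indicator {x<..} y = ennreal (h y) * indicator {x<..<x + real N} y"
        using True N by (simp add: indicator_def)
      also have "\<dots> \<le> (SUP n. ennreal (h y) * indicator {x<..<x + real n} y)"
        by (rule SUP_upper) auto
      finally show "ennreal (h y) * indicator {x<..} y \<le> (SUP n. ennreal (h y) * indicator {x<..<x + real n} y)" .
      show "(SUP n. ennreal (h y) * indicator {x<..<x + real n} y) \<le> ennreal (h y) * indicator {x<..} y"
        by (rule SUP_least) (auto simp: indicator_def)
    qed
  qed
  have "(\<integral>\<^sup>+ y\<in>{x<..}. ennreal (h y) \<partial>lborel) = (\<integral>\<^sup>+ y. (SUP n. ennreal (h y) * indicator {x<..<x + real n} y) \<partial>lborel)"
    by (simp add: eq)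
  also have "\<dots> = (SUP n. \<integral>\<^sup>+ y\<in>{x<..<x + real n}. ennreal (h y) \<partial>lborel)"
  proof (rule nn_integral_monotone_convergence_SUP)
    show "incseq (\<lambda>n y. ennreal (h y) * indicator {x<..<x + real n} y)"
      by (auto simp: incseq_def le_fun_def indicator_def intro!: mult_left_mono)
  qed (use assms in auto)
  finally show ?thesis .
qed




lemma adm_meas: "admissible f \<Longrightarrow> (\<lambda>y. indicator {0<..} y * f y) \<in> borel_measurable lborel"
  by (simp add: admissible_def set_borel_measurable_def)

lemma adm_hsetup: "admissible f \<Longrightarrow> x > 0 \<Longrightarrow> p > 0 \<Longrightarrow> hsetup f x p"
  unfolding admissible_def hsetup_def by auto

lemma pw_meas:
  assumes f: "admissible f" and x: "x > 0"
  shows "(\<lambda>y. ennreal (f y) * indicator {x<..<x + real n} y) \<in> borel_measurable lborel"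
    and "(\<lambda>y. ennreal (p * (y - x) powr (p - 1) * f y powr p) * indicator {x<..<x + real n} y) \<in> borel_measurable lborel"
proof -
  define f0 where "f0 y = indicator {0<..} y * f y" for y
  have m: "f0 \<in> borel_measurable lborel" using adm_meas[OF f] by (simp add: f0_def[abs_def])
  have e1: "(\<lambda>y. ennreal (f y) * indicator {x<..<x + real n} y) = (\<lambda>y. ennreal (f0 y) * indicator {x<..<x + real n} y)"
    using x by (auto simp: f0_def indicator_def fun_eq_iff)
  have e2: "(\<lambda>y. ennreal (p * (y - x) powr (p - 1) * f y powr p) * indicator {x<..<x + real n} y)
      = (\<lambda>y. ennreal (p * (y - x) powr (p - 1) * f0 y powr p) * indicator {x<..<x + real n} y)"
    using x by (auto simp: f0_def indicator_def fun_eq_iff)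
  show "(\<lambda>y. ennreal (f y) * indicator {x<..<x + real n} y) \<in> borel_measurable lborel"
    unfolding e1 using m by measurable
  show "(\<lambda>y. ennreal (p * (y - x) powr (p - 1) * f y powr p) * indicator {x<..<x + real n} y) \<in> borel_measurable lborel"
    unfolding e2 using m by measurable
qed

lemma pw_ge1:
  assumes f: "admissible f" and x: "x > 0" and p1: "p \<ge> 1"
  shows "(\<integral>\<^sup>+ y\<in>{x<..}. ennreal (p * (y - x) powr (p - 1) * f y powr p) \<partial>lborel)
           \<le> ennpow (\<integral>\<^sup>+ y\<in>{x<..}. ennreal (f y) \<partial>lborel) p"
proof -
  interpret hsetup f x p using adm_hsetup[OF f x] p1 by simp
  define F where "F = (\<integral>\<^sup>+ y\<in>{x<..}. ennreal (f y) \<partial>lborel)"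
  have "(\<integral>\<^sup>+ y\<in>{x<..}. ennreal (p * (y - x) powr (p - 1) * f y powr p) \<partial>lborel)
     = (SUP n. \<integral>\<^sup>+ y\<in>{x<..<x + real n}. ennreal (p * (y - x) powr (p - 1) * f y powr p) \<partial>lborel)"
    by (rule mct_Ioi[OF pw_meas(2)[OF f x]])
  also have "\<dots> = (SUP n. ennreal (K (x + real n)))"
  proof (rule SUP_cong[OF refl])
    fix n show "(\<integral>\<^sup>+ y\<in>{x<..<x + real n}. ennreal (p * (y - x) powr (p - 1) * f y powr p) \<partial>lborel) = ennreal (K (x + real n))"
      using K_nn[of "x + real n"] unfolding k_def by simp
  qed
  also have "\<dots> \<le> ennpow F p"
  proof (rule SUP_least)
    fix n
    have sx: "x + real n \<ge> x" by simp
    have "ennreal (K (x + real n)) \<le> ennreal (G (x + real n) powr p)"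
      using ge1_noe[OF p1 sx] by (simp add: ennreal_leI)
    also have "\<dots> \<le> ennpow F p"
    proof (cases "F = \<infinity>")
      case True thus ?thesis by (simp add: ennpow_def)
    next
      case False
      have "ennreal (G (x + real n)) \<le> F"
        unfolding G_nn[OF sx, symmetric] F_def
        by (rule nn_integral_mono) (auto simp: indicator_def)
      hence "enn2real (ennreal (G (x + real n))) \<le> enn2real F"
        using False by (intro enn2real_mono) (auto simp: less_top)
      hence "G (x + real n) \<le> enn2real F" using G_nonneg[OF sx] by simp
      hence "G (x + real n) powr p \<le> enn2real F powr p"
        using G_nonneg[OF sx] p by (intro powr_mono2) auto
      thus ?thesis using False by (simp add: ennpow_def ennreal_leI)
    qed
    finally show "ennreal (K (x + real n)) \<le> ennpow F p" .
  qed
  finally show ?thesis by (simp add: F_def)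
qed

lemma pw_le1:
  assumes f: "admissible f" and x: "x > 0" and p0: "p > 0" and p1: "p \<le> 1"
  shows "ennpow (\<integral>\<^sup>+ y\<in>{x<..}. ennreal (f y) \<partial>lborel) p
     \<le> (\<integral>\<^sup>+ y\<in>{x<..}. ennreal (p * (y - x) powr (p - 1) * f y powr p) \<partial>lborel)"
proof -
  interpret hsetup f x p using adm_hsetup[OF f x p0] .
  define Kinf where "Kinf = (\<integral>\<^sup>+ y\<in>{x<..}. ennreal (p * (y - x) powr (p - 1) * f y powr p) \<partial>lborel)"
  have F: "(\<integral>\<^sup>+ y\<in>{x<..}. ennreal (f y) \<partial>lborel) = (SUP n. ennreal (G (x + real n)))"
    unfolding mct_Ioi[OF pw_meas(1)[OF f x]]
  proof (rule SUP_cong[OF refl])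
    fix n show "(\<integral>\<^sup>+ y\<in>{x<..<x + real n}. ennreal (f y) \<partial>lborel) = ennreal (G (x + real n))"
      using G_nn[of "x + real n"] by simp
  qed
  show ?thesis
  proof (cases "Kinf = \<infinity>")
    case True thus ?thesis by (simp add: Kinf_def)
  next
    case False
    then obtain r where r: "Kinf = ennreal r" "r \<ge> 0" by (cases Kinf) auto
    have bound: "G (x + real n) \<le> r powr (1/p)" for n
    proof -
      have sx: "x + real n \<ge> x" by simp
      have "ennreal (K (x + real n)) = (\<integral>\<^sup>+ y\<in>{x<..<x + real n}. ennreal (p * (y - x) powr (p - 1) * f y powr p) \<partial>lborel)"
        using K_nn[OF sx] unfolding k_def by simp
      also have "\<dots> \<le> Kinf" unfolding Kinf_def
        by (rule nn_integral_mono) (auto simp: indicator_def)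
      finally have "ennreal (K (x + real n)) \<le> Kinf" .
      hence "K (x + real n) \<le> r" using r by (simp add: ennreal_le_iff)
      hence "G (x + real n) powr p \<le> r" using le1_noe[OF p1 sx] by simp
      hence "(G (x + real n) powr p) powr (1/p) \<le> r powr (1/p)"
        using p0 by (intro powr_mono2) auto
      thus ?thesis using G_nonneg[OF sx] p0 by (simp add: powr_powr)
    qed
    have "(\<integral>\<^sup>+ y\<in>{x<..}. ennreal (f y) \<partial>lborel) \<le> ennreal (r powr (1/p))"
      unfolding F by (rule SUP_least) (use bound in \<open>simp add: ennreal_leI\<close>)
    moreover obtain F' where F'0: "(\<integral>\<^sup>+ y\<in>{x<..}. ennreal (f y) \<partial>lborel) = ennreal F'" "F' \<ge> 0"
    proof (cases "(\<integral>\<^sup>+ y\<in>{x<..}. ennreal (f y) \<partial>lborel)")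
      case (real r) thus ?thesis using that by auto
    next
      case top thus ?thesis using calculation by (simp add: top_unique)
    qed
    ultimately have F': "(\<integral>\<^sup>+ y\<in>{x<..}. ennreal (f y) \<partial>lborel) = ennreal F'" "F' \<ge> 0"
      "F' \<le> r powr (1/p)" using F'0 by (auto simp: ennreal_le_iff)
    have "F' powr p \<le> (r powr (1/p)) powr p" using F' p0 by (intro powr_mono2) auto
    also have "\<dots> = r" using r p0 by (simp add: powr_powr)
    finally show ?thesis using F' r by (simp add: ennpow_def Kinf_def[symmetric] ennreal_leI)
  qed
qed




lemma beta_scaled:
  fixes y a b :: real
  assumes y: "y > 0" and a: "a > 0" and b: "b > 0"
  shows "((\<lambda>x. x powr (a - 1) * (y - x) powr (b - 1)) has_integral y powr (a + b - 1) * Beta a b) {0..y}"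
proof -
  define g where "g t = t powr (a - 1) * (1 - t) powr (b - 1)" for t :: real
  have "((\<lambda>x. g ((1/y) * x)) has_integral (1 / \<bar>1/y\<bar>) *\<^sub>R Beta a b) ((\<lambda>x. x / (1/y)) ` {0..1})"
    by (rule has_integral_stretch_real) (use has_integral_Beta_real[OF a b] y in \<open>auto simp: g_def[abs_def]\<close>)
  moreover have "(\<lambda>x. x / (1/y)) ` {0..1} = {0..y}"
  proof
    show "(\<lambda>x. x / (1/y)) ` {0..1} \<subseteq> {0..y}" using y by (auto simp: mult_le_cancel_left1)
    show "{0..y} \<subseteq> (\<lambda>x. x / (1/y)) ` {0..1}"
    proof
      fix z assume z: "z \<in> {0..y}"
      have "z = (z / y) / (1/y)" using y by simp
      moreover have "z / y \<in> {0..1}" using z y by auto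
      ultimately show "z \<in> (\<lambda>x. x / (1/y)) ` {0..1}" by blast
    qed
  qed
  ultimately have h1: "((\<lambda>x. g (x / y)) has_integral y * Beta a b) {0..y}"
    using y by simp
  have h2: "((\<lambda>x. y powr (a + b - 2) * g (x / y)) has_integral y powr (a + b - 2) * (y * Beta a b)) {0..y}"
    by (rule has_integral_mult_right[OF h1])
  have eq: "y powr (a + b - 2) * g (x / y) = x powr (a - 1) * (y - x) powr (b - 1)" if x: "x \<in> {0..y}" for x
  proof -
    have "1 - x / y = (y - x) / y" using y by (simp add: field_simps)
    hence "g (x / y) = (x powr (a - 1) / y powr (a - 1)) * ((y - x) powr (b - 1) / y powr (b - 1))"
      using x y by (simp add: g_def powr_divide)
    moreover have "y powr (a + b - 2) = y powr (a - 1) * y powr (b - 1)"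
      by (simp add: powr_add[symmetric])
    ultimately show ?thesis using y by (simp add: field_simps)
  qed
  have val: "y powr (a + b - 2) * (y * Beta a b) = y powr (a + b - 1) * Beta a b"
  proof -
    have "y powr (a + b - 1) = y powr (a + b - 2) * y"
      using powr_add[of y "a + b - 2" 1] y by simp
    thus ?thesis using y by (simp add: mult_ac)
  qed
  show ?thesis using h2 unfolding val
    by (rule has_integral_eq[rotated]) (use eq in auto)
qed

lemma beta_nn:
  fixes y a b :: real
  assumes y: "y > 0" and a: "a > 0" and b: "b > 0"
  shows "(\<integral>\<^sup>+ x\<in>{0<..<y}. ennreal (x powr (a - 1) * (y - x) powr (b - 1)) \<partial>lborel) = ennreal (y powr (a + b - 1) * Beta a b)"
  by (rule nn_integral_has_integral_lebesgue')
     (use beta_scaled[OF assms] in \<open>auto simp: has_integral_Icc_iff_Ioo[symmetric]\<close>)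

lemma tonelli_B:
  fixes g :: "real \<Rightarrow> real" and p \<alpha> :: real
  assumes gm: "g \<in> borel_measurable lborel" and g0: "\<And>y. g y \<ge> 0" and p: "p > 0" and a: "\<alpha> > 0"
  shows "(\<integral>\<^sup>+ x\<in>{0<..}. (\<integral>\<^sup>+ y\<in>{x<..}. ennreal (p * (y - x) powr (p - 1) * g y powr p) \<partial>lborel)
              * ennreal (x powr \<alpha> / x) \<partial>lborel)
       = ennreal (p * Beta p \<alpha>) * (\<integral>\<^sup>+ y\<in>{0<..}. ennreal ((y * g y) powr p * (y powr \<alpha> / y)) \<partial>lborel)"
proof -
  define H where "H x y = ennreal (if 0 < x \<and> x < y then p * (y - x) powr (p - 1) * g y powr p * x powr (\<alpha> - 1) else 0)" for x y :: real
  have Hm: "case_prod H \<in> borel_measurable (lborel \<Otimes>\<^sub>M lborel)"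
    unfolding H_def[abs_def] using gm by measurable
  have step1: "(\<integral>\<^sup>+ y\<in>{x<..}. ennreal (p * (y - x) powr (p - 1) * g y powr p) \<partial>lborel)
              * ennreal (x powr \<alpha> / x) * indicator {0<..} x = (\<integral>\<^sup>+ y. H x y \<partial>lborel)" for x
  proof -
    have "(\<integral>\<^sup>+ y\<in>{x<..}. ennreal (p * (y - x) powr (p - 1) * g y powr p) \<partial>lborel)
              * (ennreal (x powr \<alpha> / x) * indicator {0<..} x)
        = (\<integral>\<^sup>+ y. ennreal (p * (y - x) powr (p - 1) * g y powr p) * indicator {x<..} y
              * (ennreal (x powr \<alpha> / x) * indicator {0<..} x) \<partial>lborel)"
      by (rule nn_integral_multc[symmetric]) (use gm in measurable)
    also have "\<dots> = (\<integral>\<^sup>+ y. H x y \<partial>lborel)"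
    proof (rule nn_integral_cong)
      fix y
      show "ennreal (p * (y - x) powr (p - 1) * g y powr p) * indicator {x<..} y
              * (ennreal (x powr \<alpha> / x) * indicator {0<..} x) = H x y"
      proof (cases "0 < x \<and> x < y")
        case True
        have "x powr \<alpha> / x = x powr (\<alpha> - 1)" using True by (simp add: powr_diff)
        thus ?thesis using True p g0[of y] by (simp add: H_def ennreal_mult'' mult_ac)
      next
        case False thus ?thesis by (auto simp: H_def indicator_def)
      qed
    qed
    finally show ?thesis by (simp add: mult_ac)
  qed
  have step2: "(\<integral>\<^sup>+ x. H x y \<partial>lborel)
      = ennreal (p * Beta p \<alpha>) * (ennreal ((y * g y) powr p * (y powr \<alpha> / y)) * indicator {0<..} y)" for y
  proof (cases "y > 0")
    case False
    hence "\<And>x. H x y = 0" by (auto simp: H_def)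
    thus ?thesis using False by simp
  next
    case True
    have "(\<integral>\<^sup>+ x. H x y \<partial>lborel) = (\<integral>\<^sup>+ x. ennreal (p * g y powr p) *
        (ennreal (x powr (\<alpha> - 1) * (y - x) powr (p - 1)) * indicator {0<..<y} x) \<partial>lborel)"
      by (rule nn_integral_cong) (use p g0 in \<open>auto simp: H_def indicator_def ennreal_mult'' mult_ac\<close>)
    also have "\<dots> = ennreal (p * g y powr p) * ennreal (y powr (\<alpha> + p - 1) * Beta \<alpha> p)"
      by (subst nn_integral_cmult) (use beta_nn[OF True a p] in \<open>auto\<close>)
    also have "\<dots> = ennreal (p * Beta p \<alpha>) * ennreal ((y * g y) powr p * (y powr \<alpha> / y))"
    proof -
      have "(y * g y) powr p * (y powr \<alpha> / y) = g y powr p * (y powr p * y powr (\<alpha> - 1))"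
        using True g0[of y] by (simp add: powr_mult powr_diff mult_ac)
      also have "y powr p * y powr (\<alpha> - 1) = y powr (\<alpha> + p - 1)"
      proof -
        have e: "\<alpha> + p - 1 = p + (\<alpha> - 1)" by simp
        show ?thesis unfolding e by (rule powr_add[symmetric])
      qed
      finally have "(y * g y) powr p * (y powr \<alpha> / y) = g y powr p * y powr (\<alpha> + p - 1)" .
      hence req: "p * g y powr p * (y powr (\<alpha> + p - 1) * Beta \<alpha> p) = p * Beta p \<alpha> * ((y * g y) powr p * (y powr \<alpha> / y))"
        by (simp add: Beta_commute[of \<alpha> p] mult_ac)
      have B0: "Beta \<alpha> p \<ge> 0" "Beta p \<alpha> \<ge> 0" using a p by (simp_all add: Beta_def Gamma_real_pos less_imp_le)
      have X0: "(y * g y) powr p * (y powr \<alpha> / y) \<ge> 0" using True by simp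
      have "ennreal (p * g y powr p) * ennreal (y powr (\<alpha> + p - 1) * Beta \<alpha> p)
          = ennreal (p * g y powr p * (y powr (\<alpha> + p - 1) * Beta \<alpha> p))"
        using p B0 by (simp add: ennreal_mult)
      also have "\<dots> = ennreal (p * Beta p \<alpha> * ((y * g y) powr p * (y powr \<alpha> / y)))" by (simp only: req)
      also have "\<dots> = ennreal (p * Beta p \<alpha>) * ennreal ((y * g y) powr p * (y powr \<alpha> / y))"
        by (rule ennreal_mult) (use p B0 X0 in auto)
      finally show ?thesis .
    qed
    finally show ?thesis using True by simp
  qed
  have "(\<integral>\<^sup>+ x\<in>{0<..}. (\<integral>\<^sup>+ y\<in>{x<..}. ennreal (p * (y - x) powr (p - 1) * g y powr p) \<partial>lborel)
              * ennreal (x powr \<alpha> / x) \<partial>lborel) = (\<integral>\<^sup>+ x. (\<integral>\<^sup>+ y. H x y \<partial>lborel) \<partial>lborel)"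
    using step1 by simp
  also have "\<dots> = (\<integral>\<^sup>+ y. (\<integral>\<^sup>+ x. H x y \<partial>lborel) \<partial>lborel)"
    by (rule lborel_pair.Fubini'[OF Hm, symmetric])
  also have "\<dots> = (\<integral>\<^sup>+ y. ennreal (p * Beta p \<alpha>) * (ennreal ((y * g y) powr p * (y powr \<alpha> / y)) * indicator {0<..} y) \<partial>lborel)"
    using step2 by simp
  also have "\<dots> = ennreal (p * Beta p \<alpha>) * (\<integral>\<^sup>+ y\<in>{0<..}. ennreal ((y * g y) powr p * (y powr \<alpha> / y)) \<partial>lborel)"
    by (rule nn_integral_cmult) (use gm in measurable)
  finally show ?thesis .
qed




definition Kint :: "(real \<Rightarrow> real) \<Rightarrow> real \<Rightarrow> real \<Rightarrow> ennreal" where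
  "Kint f p x = (\<integral>\<^sup>+ y\<in>{x<..}. ennreal (p * (y - x) powr (p - 1) * f y powr p) \<partial>lborel)"

lemma keyeq:
  assumes f: "admissible f" and p: "p > 0" and a: "\<alpha> > 0"
  shows "(\<integral>\<^sup>+ x\<in>{0<..}. Kint f p x * ennreal (x powr \<alpha> / x) \<partial>lborel) = ennreal (p * Beta p \<alpha>) * hardy_rhs f p \<alpha>"
proof -
  define f0 where "f0 y = indicator {0<..} y * f y" for y
  have f0m: "f0 \<in> borel_measurable lborel" using adm_meas[OF f] by (simp add: f0_def[abs_def])
  have f00: "f0 y \<ge> 0" for y using f by (auto simp: f0_def admissible_def indicator_def)
  have "(\<integral>\<^sup>+ x\<in>{0<..}. Kint f p x * ennreal (x powr \<alpha> / x) \<partial>lborel)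
     = (\<integral>\<^sup>+ x\<in>{0<..}. (\<integral>\<^sup>+ y\<in>{x<..}. ennreal (p * (y - x) powr (p - 1) * f0 y powr p) \<partial>lborel)
              * ennreal (x powr \<alpha> / x) \<partial>lborel)"
  proof (rule nn_integral_cong)
    fix x
    show "Kint f p x * ennreal (x powr \<alpha> / x) * indicator {0<..} x =
      (\<integral>\<^sup>+ y\<in>{x<..}. ennreal (p * (y - x) powr (p - 1) * f0 y powr p) \<partial>lborel) * ennreal (x powr \<alpha> / x) * indicator {0<..} x"
    proof (cases "x > 0")
      case True
      have "Kint f p x = (\<integral>\<^sup>+ y\<in>{x<..}. ennreal (p * (y - x) powr (p - 1) * f0 y powr p) \<partial>lborel)"
        unfolding Kint_def by (rule nn_integral_cong) (use True in \<open>auto simp: f0_def indicator_def\<close>)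
      thus ?thesis by simp
    qed simp
  qed
  also have "\<dots> = ennreal (p * Beta p \<alpha>) * (\<integral>\<^sup>+ y\<in>{0<..}. ennreal ((y * f0 y) powr p * (y powr \<alpha> / y)) \<partial>lborel)"
    by (rule tonelli_B[OF f0m f00 p a])
  also have "(\<integral>\<^sup>+ y\<in>{0<..}. ennreal ((y * f0 y) powr p * (y powr \<alpha> / y)) \<partial>lborel) = hardy_rhs f p \<alpha>"
    unfolding hardy_rhs_def by (rule nn_integral_cong) (auto simp: f0_def indicator_def)
  finally show ?thesis .
qed

lemma main_ineqs:
  assumes f: "admissible f" and p: "p > 0" and a: "\<alpha> > 0"
  shows "p \<ge> 1 \<Longrightarrow> hardy_lhs f p \<alpha> \<ge> ennreal (p * Beta p \<alpha>) * hardy_rhs f p \<alpha>"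
    and "p \<le> 1 \<Longrightarrow> hardy_lhs f p \<alpha> \<le> ennreal (p * Beta p \<alpha>) * hardy_rhs f p \<alpha>"
proof -
  assume p1: "p \<ge> 1"
  have "(\<integral>\<^sup>+ x\<in>{0<..}. Kint f p x * ennreal (x powr \<alpha> / x) \<partial>lborel) \<le> hardy_lhs f p \<alpha>"
    unfolding hardy_lhs_def
  proof (rule nn_integral_mono)
    fix x
    show "Kint f p x * ennreal (x powr \<alpha> / x) * indicator {0<..} x \<le>
       ennpow (\<integral>\<^sup>+ y\<in>{x<..}. ennreal (f y) \<partial>lborel) p * ennreal (x powr \<alpha> / x) * indicator {0<..} x"
    proof (cases "x > 0")
      case True
      show ?thesis using pw_ge1[OF f True p1] unfolding Kint_def[symmetric]
        by (intro mult_right_mono) auto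
    qed simp
  qed
  thus "hardy_lhs f p \<alpha> \<ge> ennreal (p * Beta p \<alpha>) * hardy_rhs f p \<alpha>" using keyeq[OF f p a] by simp
next
  assume p1: "p \<le> 1"
  have "hardy_lhs f p \<alpha> \<le> (\<integral>\<^sup>+ x\<in>{0<..}. Kint f p x * ennreal (x powr \<alpha> / x) \<partial>lborel)"
    unfolding hardy_lhs_def
  proof (rule nn_integral_mono)
    fix x
    show "ennpow (\<integral>\<^sup>+ y\<in>{x<..}. ennreal (f y) \<partial>lborel) p * ennreal (x powr \<alpha> / x) * indicator {0<..} x
       \<le> Kint f p x * ennreal (x powr \<alpha> / x) * indicator {0<..} x"
    proof (cases "x > 0")
      case True
      show ?thesis using pw_le1[OF f True p p1] unfolding Kint_def[symmetric]
        by (intro mult_right_mono) auto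
    qed simp
  qed
  thus "hardy_lhs f p \<alpha> \<le> ennreal (p * Beta p \<alpha>) * hardy_rhs f p \<alpha>" using keyeq[OF f p a] by simp
qed




definition f1 :: "real \<Rightarrow> real" where "f1 y = (if y \<le> 1 then 1 else 0)"

lemma f1_adm: "admissible f1"
  unfolding admissible_def set_borel_measurable_def f1_def by (auto, measurable)

lemma f1_pw:
  assumes x: "x > 0" and p: "p > 0"
  shows "ennpow (\<integral>\<^sup>+ y\<in>{x<..}. ennreal (f1 y) \<partial>lborel) p = Kint f1 p x"
proof (cases "x < 1")
  case False
  have "(\<integral>\<^sup>+ y\<in>{x<..}. ennreal (f1 y) \<partial>lborel) = 0"
    using False by (subst nn_integral_0_iff_AE) (auto simp: f1_def indicator_def)
  moreover have "Kint f1 p x = 0"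
    unfolding Kint_def using False p by (subst nn_integral_0_iff_AE) (auto simp: f1_def indicator_def)
  ultimately show ?thesis using p by (simp add: ennpow_def)
next
  case True
  interpret hsetup f1 x p using adm_hsetup[OF f1_adm x p] .
  have "(\<integral>\<^sup>+ y\<in>{x<..}. ennreal (f1 y) \<partial>lborel) = (\<integral>\<^sup>+ y. indicator {x<..1} y \<partial>lborel)"
    by (rule nn_integral_cong) (auto simp: f1_def indicator_def)
  also have "\<dots> = ennreal (1 - x)" using True by simp
  finally have F: "(\<integral>\<^sup>+ y\<in>{x<..}. ennreal (f1 y) \<partial>lborel) = ennreal (1 - x)" .
  have "Kint f1 p x = (\<integral>\<^sup>+ y. ennreal (p * (y - x) powr (p - 1)) * indicator {x<..<1} y \<partial>lborel)"
    unfolding Kint_def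
  proof (rule nn_integral_cong_AE)
    show "AE y in lborel. ennreal (p * (y - x) powr (p - 1) * f1 y powr p) * indicator {x<..} y =
        ennreal (p * (y - x) powr (p - 1)) * indicator {x<..<1} y"
      using AE_lborel_singleton[of 1] by eventually_elim (use p in \<open>auto simp: f1_def indicator_def\<close>)
  qed
  also have "\<dots> = ennreal ((1 - x) powr p)"
    by (rule nn_integral_has_integral_lebesgue')
       (use pow_int[of 1] True p in \<open>auto simp: has_integral_Icc_iff_Ioo[symmetric]\<close>)
  finally show ?thesis using F True by (simp add: ennpow_def)
qed

lemma f1_rhs:
  assumes p: "p > 0" and a: "\<alpha> > 0"
  shows "hardy_rhs f1 p \<alpha> = ennreal (1 / (p + \<alpha>))"
proof -
  have "hardy_rhs f1 p \<alpha> = (\<integral>\<^sup>+ y. ennreal (y powr (p + \<alpha> - 1)) * indicator {0<..<1} y \<partial>lborel)"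
    unfolding hardy_rhs_def
  proof (rule nn_integral_cong_AE)
    show "AE y in lborel. ennreal ((y * f1 y) powr p * (y powr \<alpha> / y)) * indicator {0<..} y =
        ennreal (y powr (p + \<alpha> - 1)) * indicator {0<..<1} y"
      using AE_lborel_singleton[of 1]
    proof eventually_elim
      fix y :: real assume "y \<noteq> 1"
      show "ennreal ((y * f1 y) powr p * (y powr \<alpha> / y)) * indicator {0<..} y =
        ennreal (y powr (p + \<alpha> - 1)) * indicator {0<..<1} y"
      proof (cases "0 < y \<and> y < 1")
        case True
        have "y powr p * (y powr \<alpha> / y) = y powr (p + \<alpha> - 1)"
          using True by (simp add: powr_add powr_diff)
        thus ?thesis using True by (simp add: f1_def indicator_def)
      next
        case False
        thus ?thesis using \<open>y \<noteq> 1\<close> p by (auto simp: f1_def indicator_def)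
      qed
    qed
  qed
  also have "\<dots> = ennreal (1 / (p + \<alpha>))"
  proof (rule nn_integral_has_integral_lebesgue')
    have "((\<lambda>y. y powr (p + \<alpha> - 1)) has_integral (1 powr (p + \<alpha> - 1 + 1) / (p + \<alpha> - 1 + 1))) {0..1}"
      by (rule has_integral_powr_from_0) (use p a in auto)
    thus "((\<lambda>y. y powr (p + \<alpha> - 1)) has_integral 1 / (p + \<alpha>)) {0<..<1}"
      by (simp add: has_integral_Icc_iff_Ioo[symmetric])
  qed auto
  finally show ?thesis .
qed

lemma f1_lhs:
  assumes p: "p > 0" and a: "\<alpha> > 0"
  shows "hardy_lhs f1 p \<alpha> = ennreal (p * Beta p \<alpha>) * hardy_rhs f1 p \<alpha>"
proof -
  have "hardy_lhs f1 p \<alpha> = (\<integral>\<^sup>+ x\<in>{0<..}. Kint f1 p x * ennreal (x powr \<alpha> / x) \<partial>lborel)"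
    unfolding hardy_lhs_def
  proof (rule nn_integral_cong)
    fix x show "ennpow (\<integral>\<^sup>+ y\<in>{x<..}. ennreal (f1 y) \<partial>lborel) p * ennreal (x powr \<alpha> / x) * indicator {0<..} x =
      Kint f1 p x * ennreal (x powr \<alpha> / x) * indicator {0<..} x"
    proof (cases "x > 0")
      case True show ?thesis by (simp only: f1_pw[OF True p])
    qed simp
  qed
  thus ?thesis using keyeq[OF f1_adm p a] by simp
qed



theorem mainTheorem9:
  fixes p \<alpha> :: real
  assumes "p > 0" and "\<alpha> > 0"
  shows "(p \<ge> 1 \<longrightarrow>
           (\<forall>f. admissible f \<longrightarrow>
              hardy_lhs f p \<alpha> \<ge> ennreal (p * Beta p \<alpha>) * hardy_rhs f p \<alpha>)
         \<and> (\<forall>C::real. C > p * Beta p \<alpha> \<longrightarrow>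
              (\<exists>f. admissible f \<and> \<not> (hardy_lhs f p \<alpha> \<ge> ennreal C * hardy_rhs f p \<alpha>))))
       \<and> (p \<le> 1 \<longrightarrow>
           (\<forall>f. admissible f \<longrightarrow>
              hardy_lhs f p \<alpha> \<le> ennreal (p * Beta p \<alpha>) * hardy_rhs f p \<alpha>)
         \<and> (\<forall>C::real. C < p * Beta p \<alpha> \<longrightarrow>
              (\<exists>f. admissible f \<and> \<not> (hardy_lhs f p \<alpha> \<le> ennreal C * hardy_rhs f p \<alpha>))))"
proof -
  have p: "p > 0" and a: "\<alpha> > 0" using assms by auto
  have Bpos: "Beta p \<alpha> > 0" using p a by (simp add: Beta_def Gamma_real_pos)
  define r where "r = 1 / (p + \<alpha>)"
  have r: "r > 0" using p a by (simp add: r_def)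
  have R: "hardy_rhs f1 p \<alpha> = ennreal r" using f1_rhs[OF p a] by (simp add: r_def)
  have Cr: "ennreal C * ennreal r = ennreal (C * r)" for C using r by (simp add: ennreal_mult'')
  have L: "hardy_lhs f1 p \<alpha> = ennreal (p * Beta p \<alpha> * r)"
    using f1_lhs[OF p a] R Cr by simp
  have s1: "\<not> (hardy_lhs f1 p \<alpha> \<ge> ennreal C * hardy_rhs f1 p \<alpha>)" if C: "C > p * Beta p \<alpha>" for C
  proof -
    have pB: "p * Beta p \<alpha> > 0" using mult_pos_pos[OF p Bpos] .
    hence "C > 0" using C by linarith
    hence "C * r > 0" using r by (rule mult_pos_pos)
    moreover have "p * Beta p \<alpha> * r < C * r" using mult_strict_right_mono[OF C r] .
    ultimately have "ennreal (p * Beta p \<alpha> * r) < ennreal (C * r)"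
      by (intro ennreal_lessI)
    thus ?thesis unfolding L R Cr by simp
  qed
  have s2: "\<not> (hardy_lhs f1 p \<alpha> \<le> ennreal C * hardy_rhs f1 p \<alpha>)" if C: "C < p * Beta p \<alpha>" for C
  proof -
    have pB: "p * Beta p \<alpha> * r > 0" using mult_pos_pos[OF mult_pos_pos[OF p Bpos] r] .
    moreover have "C * r < p * Beta p \<alpha> * r" using mult_strict_right_mono[OF C r] .
    ultimately have "ennreal (C * r) < ennreal (p * Beta p \<alpha> * r)"
      by (intro ennreal_lessI)
    thus ?thesis unfolding L R Cr by simp
  qed
  show ?thesis using main_ineqs[OF _ p a] s1 s2 f1_adm by blast
qed

end
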